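(* Let $H$ be a connected graph of order $a \in \mathbb{N}$. Then for every integer $b \ge 2$, $R_\mathrm{cyc}(H, C_b^\mathrm{mon}) \ge 1 + (a-1)(b-1)$.
   Context: All graphs are finite, simple and undirected, and a graph of order $n$ has vertex set $\{0,1,\ldots,n-1\}$; $K_n$ is the complete graph on $\{0,\ldots,n-1\}$. A $2$-edge-coloring of $K_n$ assigns each edge a color in $\{1,2\}$. For a graph $H$ and such a coloring, an embedding of $H$ in color $j$ is an injective map $\varphi\colon V(H)\to V(K_n)$ such that for every edge $uv$ of $H$ the edge $\{\varphi(u),\varphi(v)\}$ has color $j$; it is increasing up to a cyclic permutation if there exists $t\in V(H)$ such that $(\varphi(t),\ldots,\varphi(|H|-1),\varphi(0),\ldots,\varphi(t-1))$ is increasing. The cyclic Ramsey number $R_\mathrm{cyc}(H_1,H_2)$ is the smallest $n$ such that every $2$-edge-coloring of $K_n$ admits an embedding of $H_1$ in color $1$ or of $H_2$ in color $2$ that is increasing up to a cyclic permutation. For $n\ge 3$, the monotone cycle $C_n^\mathrm{mon}$ is the graph of order $n$ with edges $\{i,i+1\}$ for $0\le i\le n-2$ together with $\{0,n-1\}$; by convention $C_2^\mathrm{mon}=K_2$. *)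

theory Defs
  imports Main "HOL-Library.Extended_Nat"
begin

text \<open>A graph of order n has vertex set {0..<n}; it is given as a pair (n, E)
  where E is a set of 2-element subsets of {0..<n}.\<close>
type_synonym graph = "nat \<times> nat set set"

definition graph_order :: "graph \<Rightarrow> nat" where
  "graph_order G = fst G"

definition graph_edges :: "graph \<Rightarrow> nat set set" where
  "graph_edges G = snd G"

definition wf_graph :: "graph \<Rightarrow> bool" where
  "wf_graph G \<longleftrightarrow> (\<forall>e\<in>graph_edges G. \<exists>u v. e = {u, v} \<and> u \<noteq> v \<and> u < graph_order G \<and> v < graph_order G)"

definition connected_graph :: "graph \<Rightarrow> bool" where
  "connected_graph G \<longleftrightarrow> wf_graph G \<and>
     (\<forall>u < graph_order G. \<forall>v < graph_order G. (\<lambda>x y. {x, y} \<in> graph_edges G)\<^sup>*\<^sup>* u v)"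

definition two_coloring :: "nat \<Rightarrow> (nat set \<Rightarrow> nat) \<Rightarrow> bool" where
  "two_coloring n c \<longleftrightarrow> (\<forall>u v. u < n \<longrightarrow> v < n \<longrightarrow> u \<noteq> v \<longrightarrow> c {u, v} \<in> {1, 2})"

definition embedding_in_color ::
    "graph \<Rightarrow> nat \<Rightarrow> (nat set \<Rightarrow> nat) \<Rightarrow> nat \<Rightarrow> (nat \<Rightarrow> nat) \<Rightarrow> bool" where
  "embedding_in_color H n c j \<phi> \<longleftrightarrow>
     inj_on \<phi> {0..<graph_order H} \<and> \<phi> ` {0..<graph_order H} \<subseteq> {0..<n} \<and>
     (\<forall>u v. {u, v} \<in> graph_edges H \<longrightarrow> c {\<phi> u, \<phi> v} = j)"

definition cyclic_increasing :: "nat \<Rightarrow> (nat \<Rightarrow> nat) \<Rightarrow> bool" where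
  "cyclic_increasing h \<phi> \<longleftrightarrow>
     (\<exists>t < h. \<forall>i j. i < j \<longrightarrow> j < h \<longrightarrow> \<phi> ((t + i) mod h) < \<phi> ((t + j) mod h))"

definition cyc_arrows :: "nat \<Rightarrow> graph \<Rightarrow> graph \<Rightarrow> bool" where
  "cyc_arrows n H1 H2 \<longleftrightarrow> (\<forall>c. two_coloring n c \<longrightarrow>
     (\<exists>\<phi>. embedding_in_color H1 n c 1 \<phi> \<and> cyclic_increasing (graph_order H1) \<phi>) \<or>
     (\<exists>\<phi>. embedding_in_color H2 n c 2 \<phi> \<and> cyclic_increasing (graph_order H2) \<phi>))"

text \<open>Cyclic Ramsey number, valued in enat (infinite if no such n exists).\<close>
definition R_cyc :: "graph \<Rightarrow> graph \<Rightarrow> enat" where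
  "R_cyc H1 H2 = Inf {enat n | n. cyc_arrows n H1 H2}"

text \<open>Monotone cycle; C_2 is K_2 by convention.\<close>
definition C_mon :: "nat \<Rightarrow> graph" where
  "C_mon n = (if n = 2 then (2, {{0, 1}})
              else (n, {{i, i + 1} | i. i + 1 < n} \<union> {{0, n - 1}}))"

end

theory Submission
  imports Defs
begin

definition blk :: "nat \<Rightarrow> nat set \<Rightarrow> nat" where
  "blk m e = (if \<exists>u v. e = {u, v} \<and> u div m = v div m then 1 else 2)"

lemma blk_iff: "blk m {u, v} = 1 \<longleftrightarrow> u div m = v div m"
  unfolding blk_def by (auto simp: doubleton_eq_iff)

lemma blk_col: "two_coloring n (blk m)"
  unfolding two_coloring_def blk_def by auto

lemma order_C: "graph_order (C_mon b) = b"
  unfolding C_mon_def graph_order_def by auto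

lemma edge_C:
  assumes "b \<ge> 2" "i < b"
  shows "{i, (i + 1) mod b} \<in> graph_edges (C_mon b)"
proof (cases "i + 1 < b")
  case True
  then show ?thesis using assms unfolding C_mon_def graph_edges_def
    by (auto intro!: exI[of _ i])
next
  case False
  then have "i = b - 1" using assms by auto
  moreover have "(i+1) mod b = 0" using \<open>i = b - 1\<close> assms by simp
  moreover have "{0, b - 1} \<in> graph_edges (C_mon b)" using assms(1)
    unfolding C_mon_def graph_edges_def by auto
  ultimately show ?thesis by (simp add: insert_commute)
qed

lemma part1:
  assumes "connected_graph H" "graph_order H = a"
    and "embedding_in_color H n (blk m) 1 \<phi>" "cyclic_increasing a \<phi>"
    and "n \<le> m * (b - 1)" "m = a - 1"
  shows False
proof -
  from assms(4) have a1: "a \<ge> 1" unfolding cyclic_increasing_def by auto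
  have inj: "inj_on \<phi> {0..<a}" and img: "\<phi> ` {0..<a} \<subseteq> {0..<n}"
    and ed: "\<And>u v. {u, v} \<in> graph_edges H \<Longrightarrow> \<phi> u div m = \<phi> v div m"
  proof -
    have E: "inj_on \<phi> {0..<graph_order H} \<and> \<phi> ` {0..<graph_order H} \<subseteq> {0..<n} \<and>
     (\<forall>u v. {u, v} \<in> graph_edges H \<longrightarrow> blk m {\<phi> u, \<phi> v} = 1)"
      using assms(3) unfolding embedding_in_color_def by blast
    show "inj_on \<phi> {0..<a}" "\<phi> ` {0..<a} \<subseteq> {0..<n}" using E assms(2) by blast+
    show "\<And>u v. {u, v} \<in> graph_edges H \<Longrightarrow> \<phi> u div m = \<phi> v div m"
      using E blk_iff by blast
  qed
  have "\<phi> 0 < n" using img a1 by (auto simp: image_subset_iff)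
  then have m1: "m \<ge> 1" using assms(5) by (cases "m = 0") auto
  have reach: "\<phi> v div m = \<phi> 0 div m" if "v < a" for v
  proof -
    have "(\<lambda>x y. {x, y} \<in> graph_edges H)\<^sup>*\<^sup>* 0 v"
    proof -
      have "\<forall>u < graph_order H. \<forall>v < graph_order H. (\<lambda>x y. {x, y} \<in> graph_edges H)\<^sup>*\<^sup>* u v"
        using assms(1) unfolding connected_graph_def by blast
      then show ?thesis using assms(2) that a1 by simp
    qed
    then show ?thesis
    proof (induction rule: rtranclp_induct)
      case base then show ?case by simp
    next
      case (step y z) then show ?case using ed[OF step.hyps(2)] by simp
    qed
  qed
  define k where "k = \<phi> 0 div m"
  have sub: "\<phi> ` {0..<a} \<subseteq> {k*m..<k*m+m}"
  proof
    fix x assume "x \<in> \<phi> ` {0..<a}"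
    then obtain v where v: "v < a" "x = \<phi> v" by auto
    have xk: "x div m = k" using reach[OF v(1)] v(2) k_def by simp
    have "x = k * m + x mod m" using div_mult_mod_eq[of x m] xk by simp
    moreover have "x mod m < m" using m1 by simp
    ultimately show "x \<in> {k*m..<k*m+m}" by simp
  qed
  have "card (\<phi> ` {0..<a}) = a" using inj card_image by fastforce
  moreover have "card (\<phi> ` {0..<a}) \<le> m" using card_mono[OF _ sub] by simp
  ultimately have "a \<le> m" by simp
  moreover have "m < a" using assms(6) a1 by simp
  ultimately show False by simp
qed

lemma part2:
  assumes "b \<ge> 2" "embedding_in_color (C_mon b) n (blk m) 2 \<phi>" "cyclic_increasing b \<phi>"
    and "n \<le> m * (b - 1)"
  shows False
proof -
  have img: "\<phi> ` {0..<b} \<subseteq> {0..<n}"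
    and ed: "\<And>u v. {u, v} \<in> graph_edges (C_mon b) \<Longrightarrow> blk m {\<phi> u, \<phi> v} = 2"
    using assms(2) unfolding embedding_in_color_def order_C by auto
  obtain t where t: "t < b" and inc: "\<And>i j. i < j \<Longrightarrow> j < b \<Longrightarrow>
      \<phi> ((t + i) mod b) < \<phi> ((t + j) mod b)"
    using assms(3) unfolding cyclic_increasing_def by auto
  define x where "x j = \<phi> ((t + j) mod b)" for j
  have stepx: "x j div m < x (Suc j) div m" if "Suc j < b" for j
  proof -
    have "{(t + j) mod b, ((t + j) mod b + 1) mod b} \<in> graph_edges (C_mon b)"
      using edge_C assms(1) by auto
    moreover have "((t + j) mod b + 1) mod b = (t + Suc j) mod b" by (simp add: mod_Suc_eq)
    ultimately have "blk m {x j, x (Suc j)} = 2" using ed x_def by auto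
    then have "x j div m \<noteq> x (Suc j) div m" using blk_iff[of m "x j" "x (Suc j)"] by (metis numeral_One num.distinct(1) numeral_eq_iff)
    moreover have "x j < x (Suc j)" using inc[of j "Suc j"] that x_def by auto
    ultimately show ?thesis using div_le_mono[of "x j" "x (Suc j)" m] by simp
  qed
  have ge: "j \<le> x j div m" if "j < b" for j
    using that
  proof (induction j)
    case 0 then show ?case by simp
  next
    case (Suc j) then show ?case using stepx[of j] by simp
  qed
  have "(t + (b - 1)) mod b \<in> {0..<b}" using assms(1) by simp
  then have "\<phi> ((t + (b - 1)) mod b) \<in> {0..<n}" using img by blast
  then have "x (b - 1) < n" unfolding x_def by simp
  then have "x (b - 1) < m * (b - 1)" using assms(4) by simp
  then have "x (b - 1) div m < b - 1"
    by (metis div_less_iff_less_mult mult.commute mult_zero_left not_less_zero not_gr_zero)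
  moreover have "b - 1 \<le> x (b - 1) div m" using ge assms(1) by simp
  ultimately show False by simp
qed

lemma main:
  assumes "connected_graph H" "graph_order H = a" "b \<ge> 2" "cyc_arrows n H (C_mon b)"
  shows "1 + (a - 1) * (b - 1) \<le> n"
proof (rule ccontr)
  assume "\<not> ?thesis"
  then have n: "n \<le> (a - 1) * (b - 1)" by simp
  from assms(4) blk_col[of n "a - 1"] have
    "(\<exists>\<phi>. embedding_in_color H n (blk (a - 1)) 1 \<phi> \<and> cyclic_increasing a \<phi>) \<or>
     (\<exists>\<phi>. embedding_in_color (C_mon b) n (blk (a - 1)) 2 \<phi> \<and> cyclic_increasing b \<phi>)"
    unfolding cyc_arrows_def order_C assms(2) by blast
  then show False
    using part1[OF assms(1,2) _ _ n] part2[OF assms(3) _ _ n] by blast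
qed

theorem theorem4p6:
  fixes H :: graph and a b :: nat
  assumes "connected_graph H" and "graph_order H = a" and "b \<ge> 2"
  shows "R_cyc H (C_mon b) \<ge> enat (1 + (a - 1) * (b - 1))"
  unfolding R_cyc_def
  using main[OF assms] by (auto intro!: Inf_greatest)

end
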